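(* Let $u$ be a parking sorted configuration on $K_{m,n}$, and for $s\in\mathbb Z$ let $u[s]$ be the configuration equal to $u$ outside the sink and equal to $s$ at $a_m$ (each $u[s]$ is again parking sorted). Let $F_u(x,y)=\sum_{s\in\mathbb Z}x^{\mathrm{xpara}(u[s])}y^{\mathrm{ypara}(u[s])}$. Let $S_u^+=\{s\in\mathbb Z: s\text{ is left and } s+1\text{ is right}\}$ and $S_u^-=\{s\in\mathbb Z: s\text{ is right and } s+1\text{ is left}\}$ (these are finite, with $|S_u^+|=|S_u^-|+1$). Then $$F_u(x,y)=\frac{1-xy}{(1-x)(1-y)}\Big(\sum_{s\in S_u^+}x^{\mathrm{xpara}(u[s])}y^{\mathrm{ypara}(u[s])}-\sum_{s\in S_u^-}x^{\mathrm{xpara}(u[s])}y^{\mathrm{ypara}(u[s])}\Big).$$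
   Context: Let $m,n\ge 1$. $K_{m,n}$ is the complete bipartite graph with vertex set $V=A_m\sqcup B_n$, $A_m=\{a_1,\dots,a_m\}$, $B_n=\{b_1,\dots,b_n\}$, with exactly one edge $\{a_i,b_j\}$ for every $i,j$; $a_m$ is the sink. A configuration is a function $u:V\to\mathbb Z$. For $c\in V$ with graph degree $d_c$, $\Delta^{(c)}=d_c e_c-\sum_{c'\text{ adjacent to }c}e_{c'}$ ($e_c$ the indicator of $c$), $\Delta^{(C)}=\sum_{c\in C}\Delta^{(c)}$. $u$ is parking if $u_c\ge0$ for $c\ne a_m$ and for every non-empty $C\subseteq V\setminus\{a_m\}$, $u-\Delta^{(C)}$ has a negative value at a vertex other than $a_m$; sorted if $u_{a_1}\le\dots\le u_{a_{m-1}}$ and $u_{b_1}\le\dots\le u_{b_n}$. The $r$-vector of a parking sorted $u$ is $(r_1,\dots,r_n)$, $r_i=u_{b_i}+1-\#\{j\in\{1,\dots,m-1\}: u_{a_j}+1\le i-1\}$; it depends only on the values outside the sink. For $\sigma\in\mathbb Z$ write $\sigma=qn+t$ with $0\le t<n$; $\sigma$ is called right if $q+r_{t+1}\ge1$ and left otherwise. $\mathrm{xpara}(u)=\#\{\sigma>u_{a_m}:\sigma\text{ left}\}$ and $\mathrm{ypara}(u)=\#\{\sigma\le u_{a_m}:\sigma\text{ right}\}$ (equivalently $\mathrm{xpara}(u)=(m-1)(n-1)+\mathrm{rank}(u)-\mathrm{degree}(u)$, $\mathrm{ypara}(u)=\mathrm{rank}(u)+1$). The identity is one of formal power series in $x,y$.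 *)

theory Defs
  imports "HOL-Computational_Algebra.Formal_Power_Series"
begin

text \<open>Vertices of K_{m,n}: A i (1 <= i <= m) and B j (1 <= j <= n); the sink is A m.\<close>
datatype vert = A nat | B nat

definition verts :: "nat \<Rightarrow> nat \<Rightarrow> vert set" where
  "verts m n = {A i | i. 1 \<le> i \<and> i \<le> m} \<union> {B j | j. 1 \<le> j \<and> j \<le> n}"

definition adj :: "nat \<Rightarrow> nat \<Rightarrow> vert \<Rightarrow> vert \<Rightarrow> bool" where
  "adj m n c c' \<longleftrightarrow>
     (\<exists>i j. 1 \<le> i \<and> i \<le> m \<and> 1 \<le> j \<and> j \<le> n \<and>
        ((c = A i \<and> c' = B j) \<or> (c = B j \<and> c' = A i)))"

definition deg :: "nat \<Rightarrow> nat \<Rightarrow> vert \<Rightarrow> nat" where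
  "deg m n c = card {c' \<in> verts m n. adj m n c c'}"

definition lap :: "nat \<Rightarrow> nat \<Rightarrow> vert \<Rightarrow> vert \<Rightarrow> int" where
  "lap m n c v = (if v = c then int (deg m n c) else 0) - (if adj m n c v then 1 else 0)"

definition lapset :: "nat \<Rightarrow> nat \<Rightarrow> vert set \<Rightarrow> vert \<Rightarrow> int" where
  "lapset m n C v = (\<Sum>c\<in>C. lap m n c v)"

definition parking :: "nat \<Rightarrow> nat \<Rightarrow> (vert \<Rightarrow> int) \<Rightarrow> bool" where
  "parking m n u \<longleftrightarrow>
     (\<forall>c \<in> verts m n - {A m}. 0 \<le> u c) \<and>
     (\<forall>C. C \<noteq> {} \<and> C \<subseteq> verts m n - {A m} \<longrightarrow>
        (\<exists>v \<in> verts m n - {A m}. u v - lapset m n C v < 0))"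

definition sorted_conf :: "nat \<Rightarrow> nat \<Rightarrow> (vert \<Rightarrow> int) \<Rightarrow> bool" where
  "sorted_conf m n u \<longleftrightarrow>
     (\<forall>i j. 1 \<le> i \<and> i \<le> j \<and> j \<le> m - 1 \<longrightarrow> u (A i) \<le> u (A j)) \<and>
     (\<forall>i j. 1 \<le> i \<and> i \<le> j \<and> j \<le> n \<longrightarrow> u (B i) \<le> u (B j))"

definition rvec :: "nat \<Rightarrow> nat \<Rightarrow> (vert \<Rightarrow> int) \<Rightarrow> nat \<Rightarrow> int" where
  "rvec m n u i = u (B i) + 1 - int (card {j \<in> {1..m-1}. u (A j) + 1 \<le> int i - 1})"

definition is_right :: "nat \<Rightarrow> nat \<Rightarrow> (vert \<Rightarrow> int) \<Rightarrow> int \<Rightarrow> bool" where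
  "is_right m n u \<sigma> \<longleftrightarrow>
     \<sigma> div int n + rvec m n u (nat (\<sigma> mod int n) + 1) \<ge> 1"

abbreviation is_left :: "nat \<Rightarrow> nat \<Rightarrow> (vert \<Rightarrow> int) \<Rightarrow> int \<Rightarrow> bool" where
  "is_left m n u \<sigma> \<equiv> \<not> is_right m n u \<sigma>"

definition xpara :: "nat \<Rightarrow> nat \<Rightarrow> (vert \<Rightarrow> int) \<Rightarrow> nat" where
  "xpara m n u = card {\<sigma>. \<sigma> > u (A m) \<and> is_left m n u \<sigma>}"

definition ypara :: "nat \<Rightarrow> nat \<Rightarrow> (vert \<Rightarrow> int) \<Rightarrow> nat" where
  "ypara m n u = card {\<sigma>. \<sigma> \<le> u (A m) \<and> is_right m n u \<sigma>}"

definition set_sink :: "nat \<Rightarrow> (vert \<Rightarrow> int) \<Rightarrow> int \<Rightarrow> vert \<Rightarrow> int" where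
  "set_sink m u s = u(A m := s)"

text \<open>Bivariate formal power series in x,y as real fps fps: the outer variable is y,
  the inner variable is x.\<close>
definition xvar :: "real fps fps" where "xvar = fps_const fps_X"
definition yvar :: "real fps fps" where "yvar = fps_X"

definition monom2 :: "nat \<Rightarrow> nat \<Rightarrow> real fps fps" where
  "monom2 a b = xvar ^ a * yvar ^ b"

definition Fser :: "nat \<Rightarrow> nat \<Rightarrow> (vert \<Rightarrow> int) \<Rightarrow> real fps fps" where
  "Fser m n u = Abs_fps (\<lambda>b. Abs_fps (\<lambda>a. real (card
      {s::int. xpara m n (set_sink m u s) = a \<and> ypara m n (set_sink m u s) = b})))"

definition Splus :: "nat \<Rightarrow> nat \<Rightarrow> (vert \<Rightarrow> int) \<Rightarrow> int set" where
  "Splus m n u = {s. is_left m n u s \<and> is_right m n u (s + 1)}"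

definition Sminus :: "nat \<Rightarrow> nat \<Rightarrow> (vert \<Rightarrow> int) \<Rightarrow> int set" where
  "Sminus m n u = {s. is_right m n u s \<and> is_left m n u (s + 1)}"

end

theory Submission
  imports Defs
begin
unbundle fps_syntax

lemma Dinv: "inverse ((1 - xvar) * (1 - yvar)) * ((1 - xvar) * (1 - yvar)) = 1"
proof -
  let ?f = "(1 - xvar) * (1 - yvar)"
  have f0: "?f $ 0 = 1 - fps_X"
    by (simp add: xvar_def yvar_def algebra_simps)
  have a: "(1 - fps_X :: real fps) * inverse (1 - fps_X) = 1"
    by (rule inverse_mult_eq_1') simp
  have b: "inverse (1 - fps_X :: real fps) * (1 - fps_X) = 1"
    by (rule inverse_mult_eq_1) simp
  show ?thesis
    unfolding fps_inverse_def[of ?f]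
    by (rule fps_left_inverse'[of "inverse (?f $ 0)"]) (simp_all only: f0 a b)
qed

lemma monom2_nth: "monom2 a b $ j $ i = (if j = b \<and> i = a then 1 else 0)"
  by (simp add: monom2_def xvar_def yvar_def fps_X_power_mult_right_nth)

definition Xc :: "(int \<Rightarrow> bool) \<Rightarrow> int \<Rightarrow> nat" where
  "Xc P s = card {\<sigma>. \<sigma> > s \<and> \<not> P \<sigma>}"
definition Yc :: "(int \<Rightarrow> bool) \<Rightarrow> int \<Rightarrow> nat" where
  "Yc P s = card {\<sigma>. \<sigma> \<le> s \<and> P \<sigma>}"
definition fm :: "(int \<Rightarrow> bool) \<Rightarrow> int \<Rightarrow> real fps fps" where
  "fm P s = monom2 (Xc P s) (Yc P s)"
definition ph :: "(int \<Rightarrow> bool) \<Rightarrow> int \<Rightarrow> real fps fps" where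
  "ph P s = (if P s then - ((1 - xvar) * yvar) else 1 - yvar)"
definition ee :: "(int \<Rightarrow> bool) \<Rightarrow> int \<Rightarrow> real fps fps" where
  "ee P s = (if P (s + 1) then 1 else 0) - (if P s then 1 else 0)"

lemma monom2_SucY: "monom2 a (Suc b) = yvar * monom2 a b"
  by (simp add: monom2_def algebra_simps)
lemma monom2_SucX: "monom2 (Suc a) b = xvar * monom2 a b"
  by (simp add: monom2_def algebra_simps)

lemma alg: "(D::'a::comm_ring_1) * aa = Q * bb + pK * fK - c \<Longrightarrow> D * f1 = Q * eK * fK + p1 * f1 - pK * fK
  \<Longrightarrow> D * (f1 + aa) = Q * (eK * fK + bb) + p1 * f1 - c"
proof -
  assume h1: "D * aa = Q * bb + pK * fK - c" and h2: "D * f1 = Q * eK * fK + p1 * f1 - pK * fK"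
  have "D * (f1 + aa) = D * f1 + D * aa" by (rule distrib_left)
  also have "\<dots> = (Q * eK * fK + p1 * f1 - pK * fK) + (Q * bb + pK * fK - c)" by (simp only: h1 h2)
  also have "\<dots> = Q * (eK * fK + bb) + p1 * f1 - c" by (simp add: algebra_simps)
  finally show ?thesis .
qed

lemma arL: "(s::int) < N0 \<Longrightarrow> ((c::nat) + nat (N0 - s) = a \<and> (0::nat) = b) \<longleftrightarrow> (b = 0 \<and> c < a \<and> s = N0 - int (a - c))"
  by auto
lemma arH: "(N1::int) < s \<Longrightarrow> ((0::nat) = a \<and> (c::nat) + nat (s - N1) = b) \<longleftrightarrow> (a = 0 \<and> c < b \<and> s = N1 + int (b - c))"
  by auto

locale bnd =
  fixes P :: "int \<Rightarrow> bool" and N0 N1 :: int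
  assumes left: "\<And>\<sigma>. \<sigma> \<le> N0 \<Longrightarrow> \<not> P \<sigma>"
    and right: "\<And>\<sigma>. N1 \<le> \<sigma> \<Longrightarrow> P \<sigma>"
    and N01: "N0 < N1"
begin

lemma fin1: "finite {\<sigma>. \<sigma> > s \<and> \<not> P \<sigma>}"
proof -
  have "{\<sigma>. \<sigma> > s \<and> \<not> P \<sigma>} \<subseteq> {s<..<N1}"
    using right by (auto, meson not_less)
  then show ?thesis by (rule finite_subset) simp
qed

lemma fin2: "finite {\<sigma>. \<sigma> \<le> s \<and> P \<sigma>}"
proof -
  have "{\<sigma>. \<sigma> \<le> s \<and> P \<sigma>} \<subseteq> {N0<..s}"
    using left by (auto, meson not_less)
  then show ?thesis by (rule finite_subset) simp
qed

lemma Xstep: "Xc P (K - 1) = Xc P K + (if P K then 0 else 1)"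
proof -
  have e: "{\<sigma>. \<sigma> > K - 1 \<and> \<not> P \<sigma>} = (if P K then {} else {K}) \<union> {\<sigma>. \<sigma> > K \<and> \<not> P \<sigma>}"
    by (cases "P K") (auto, (smt (verit))+)
  show ?thesis unfolding Xc_def e
    using fin1[of K] by (auto simp: card_insert_if)
qed

lemma Ystep: "Yc P K = Yc P (K - 1) + (if P K then 1 else 0)"
proof -
  have e: "{\<sigma>. \<sigma> \<le> K \<and> P \<sigma>} = (if P K then {K} else {}) \<union> {\<sigma>. \<sigma> \<le> K - 1 \<and> P \<sigma>}"
    by (cases "P K") (auto, (smt (verit))+)
  show ?thesis unfolding Yc_def e
    using fin2[of "K - 1"] by (auto simp: card_insert_if)
qed

lemma step: "(1 - xvar) * (1 - yvar) * fm P K =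
   (1 - xvar * yvar) * ee P (K - 1) * fm P (K - 1) + ph P K * fm P K - ph P (K - 1) * fm P (K - 1)"
proof (cases "P K")
  case True
  have "fm P K = yvar * fm P (K - 1)"
    unfolding fm_def using Xstep[of K] Ystep[of K] True by (simp add: monom2_SucY)
  then show ?thesis using True
    by (cases "P (K - 1)") (simp_all add: ee_def ph_def algebra_simps)
next
  case False
  have "fm P (K - 1) = xvar * fm P K"
    unfolding fm_def using Xstep[of K] Ystep[of K] False by (simp add: monom2_SucX)
  then show ?thesis using False
    by (cases "P (K - 1)") (simp_all add: ee_def ph_def algebra_simps)
qed


lemma tele: "(1 - xvar) * (1 - yvar) * (\<Sum>s\<in>{N0..N0 + int d}. fm P s) =
   (1 - xvar * yvar) * (\<Sum>s\<in>{N0 - 1..N0 - 1 + int d}. ee P s * fm P s)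
   + ph P (N0 + int d) * fm P (N0 + int d) - ph P (N0 - 1) * fm P (N0 - 1)"
proof (induction d)
  case 0
  show ?case using step[of N0] by simp
next
  case (Suc d)
  define K where "K = N0 + int d"
  have e1: "{N0..K + 1} = insert (K + 1) {N0..K}" by (auto simp: K_def)
  have e2: "{N0 - 1..N0 - 1 + int (Suc d)} = insert K {N0 - 1..N0 - 1 + int d}" by (auto simp: K_def)
  have IH: "(1 - xvar) * (1 - yvar) * (\<Sum>s\<in>{N0..K}. fm P s) =
   (1 - xvar * yvar) * (\<Sum>s\<in>{N0 - 1..N0 - 1 + int d}. ee P s * fm P s)
   + ph P K * fm P K - ph P (N0 - 1) * fm P (N0 - 1)" using Suc.IH by (simp add: K_def)
  have s: "(1 - xvar) * (1 - yvar) * fm P (K + 1) =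
   (1 - xvar * yvar) * ee P K * fm P K + ph P (K + 1) * fm P (K + 1) - ph P K * fm P K"
    using step[of "K + 1"] by simp
  have i1: "(\<Sum>s\<in>insert (K + 1) {N0..K}. fm P s) = fm P (K + 1) + (\<Sum>s\<in>{N0..K}. fm P s)"
    by (rule sum.insert) auto
  have i2: "(\<Sum>s\<in>insert K {N0 - 1..N0 - 1 + int d}. ee P s * fm P s) = ee P K * fm P K + (\<Sum>s\<in>{N0 - 1..N0 - 1 + int d}. ee P s * fm P s)"
    by (rule sum.insert) (auto simp: K_def)
  have K1: "N0 + int (Suc d) = K + 1" by (simp add: K_def)
  show ?case unfolding K1 unfolding e1 e2 i1 i2 by (rule alg[OF IH s])
qed

lemma lowX: "s \<le> N0 \<Longrightarrow> Xc P s = Xc P N0 + nat (N0 - s)"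
proof -
  assume a: "s \<le> N0"
  have e: "{\<sigma>. \<sigma> > s \<and> \<not> P \<sigma>} = {s<..N0} \<union> {\<sigma>. \<sigma> > N0 \<and> \<not> P \<sigma>}"
    using left a by auto
  show ?thesis unfolding Xc_def e
    by (subst card_Un_disjoint) (use fin1 in auto)
qed

lemma lowY: "s \<le> N0 \<Longrightarrow> Yc P s = 0"
proof -
  assume "s \<le> N0"
  then have "{\<sigma>. \<sigma> \<le> s \<and> P \<sigma>} = {}" using left by auto
  then show ?thesis unfolding Yc_def by (metis card.empty)
qed

lemma highY: "N1 \<le> s \<Longrightarrow> Yc P s = Yc P N1 + nat (s - N1)"
proof -
  assume a: "N1 \<le> s"
  have e: "{\<sigma>. \<sigma> \<le> s \<and> P \<sigma>} = {N1<..s} \<union> {\<sigma>. \<sigma> \<le> N1 \<and> P \<sigma>}"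
    using right a by auto
  show ?thesis unfolding Yc_def e
    by (subst card_Un_disjoint) (use fin2 in auto)
qed

lemma highX: "N1 \<le> s \<Longrightarrow> Xc P s = 0"
proof -
  assume "N1 \<le> s"
  then have "{\<sigma>. \<sigma> > s \<and> \<not> P \<sigma>} = {}" using right by auto
  then show ?thesis unfolding Xc_def by (metis card.empty)
qed


definition "Fg = Abs_fps (\<lambda>b. Abs_fps (\<lambda>a. real (card {s. Xc P s = a \<and> Yc P s = b})))"
definition "Low = xvar ^ (Xc P N0 + 1) * fps_const (Abs_fps (\<lambda>_. 1))"
definition "High = yvar ^ (Yc P N1 + 1) * Abs_fps (\<lambda>_. 1)"

lemma Lset: "{s. s < N0 \<and> Xc P s = a \<and> Yc P s = b} =
   (if b = 0 \<and> Xc P N0 < a then {N0 - int (a - Xc P N0)} else {})"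
proof (rule set_eqI)
  fix s
  show "s \<in> {s. s < N0 \<and> Xc P s = a \<and> Yc P s = b} \<longleftrightarrow>
     s \<in> (if b = 0 \<and> Xc P N0 < a then {N0 - int (a - Xc P N0)} else {})"
  proof (cases "s < N0")
    case True
    then have "Xc P s = Xc P N0 + nat (N0 - s)" "Yc P s = 0" using lowX[of s] lowY[of s] by auto
    then show ?thesis using True arL[OF True, of "Xc P N0" a b] by auto
  next
    case False
    then show ?thesis by auto
  qed
qed

lemma Hset: "{s. N1 < s \<and> Xc P s = a \<and> Yc P s = b} =
   (if a = 0 \<and> Yc P N1 < b then {N1 + int (b - Yc P N1)} else {})"
proof (rule set_eqI)
  fix s
  show "s \<in> {s. N1 < s \<and> Xc P s = a \<and> Yc P s = b} \<longleftrightarrow>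
     s \<in> (if a = 0 \<and> Yc P N1 < b then {N1 + int (b - Yc P N1)} else {})"
  proof (cases "N1 < s")
    case True
    then have "Yc P s = Yc P N1 + nat (s - N1)" "Xc P s = 0" using highX[of s] highY[of s] by auto
    then show ?thesis using True arH[OF True, of a "Yc P N1" b] by auto
  next
    case False
    then show ?thesis by auto
  qed
qed


lemma card_sum: "finite I \<Longrightarrow> real (card {s\<in>I. Q s}) = (\<Sum>s\<in>I. if Q s then 1 else 0)"
  by (simp add: sum.If_cases Int_def)

lemma Fg_split: "Fg = (\<Sum>s\<in>{N0..N1}. fm P s) + Low + High"
proof (rule fps_ext, rule fps_ext)
  fix b a
  let ?S = "{s. Xc P s = a \<and> Yc P s = b}"
  have eS: "?S = {s. s < N0 \<and> Xc P s = a \<and> Yc P s = b} \<union> {s\<in>{N0..N1}. Xc P s = a \<and> Yc P s = b}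
     \<union> {s. N1 < s \<and> Xc P s = a \<and> Yc P s = b}" by auto
  have c: "real (card ?S) = real (card {s. s < N0 \<and> Xc P s = a \<and> Yc P s = b})
     + real (card {s\<in>{N0..N1}. Xc P s = a \<and> Yc P s = b})
     + real (card {s. N1 < s \<and> Xc P s = a \<and> Yc P s = b})"
  proof -
    let ?L = "(if b = 0 \<and> Xc P N0 < a then {N0 - int (a - Xc P N0)} else {})"
    let ?H = "(if a = 0 \<and> Yc P N1 < b then {N1 + int (b - Yc P N1)} else {})"
    let ?M = "{s\<in>{N0..N1}. Xc P s = a \<and> Yc P s = b}"
    have f1: "finite ?L" "finite ?H" "finite ?M" by (simp, simp, rule finite_subset[of _ "{N0..N1}"], auto)
    have d1: "?L \<inter> ?M = {}" by auto
    have d2: "(?L \<union> ?M) \<inter> ?H = {}" by auto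
    have "card (?L \<union> ?M \<union> ?H) = card ?L + card ?M + card ?H"
      using card_Un_disjoint[of "?L \<union> ?M" ?H] card_Un_disjoint[of ?L ?M] f1 d1 d2 by simp
    then show ?thesis unfolding eS Lset Hset by simp
  qed
  show "Fg $ b $ a = ((\<Sum>s\<in>{N0..N1}. fm P s) + Low + High) $ b $ a"
  proof -
    have cM: "(\<Sum>s\<in>{N0..N1}. fm P s) $ b $ a = real (card {s\<in>{N0..N1}. Xc P s = a \<and> Yc P s = b})"
    proof -
      have "(\<Sum>s\<in>{N0..N1}. fm P s) $ b $ a = (\<Sum>s\<in>{N0..N1}. if Xc P s = a \<and> Yc P s = b then 1 else 0)"
        unfolding fps_sum_nth fm_def monom2_nth by (intro sum.cong) auto
      then show ?thesis using card_sum[of "{N0..N1}" "\<lambda>s. Xc P s = a \<and> Yc P s = b"] by simp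
    qed
    have cL: "Low $ b $ a = real (card {s. s < N0 \<and> Xc P s = a \<and> Yc P s = b})"
    proof -
      have "Low = fps_const (fps_X ^ (Xc P N0 + 1) * Abs_fps (\<lambda>_. 1))"
        unfolding Low_def xvar_def by (simp only: fps_const_power fps_const_mult)
      then have "Low $ b $ a = (if b = 0 then (fps_X ^ (Xc P N0 + 1) * Abs_fps (\<lambda>_. 1 :: real)) $ a else 0)"
        by simp
      also have "\<dots> = (if b = 0 \<and> Xc P N0 < a then 1 else 0)"
        by (simp only: fps_X_power_mult_nth) auto
      finally show ?thesis unfolding Lset by simp
    qed
    have cH: "High $ b $ a = real (card {s. N1 < s \<and> Xc P s = a \<and> Yc P s = b})"
    proof -
      have "High $ b = (if b < Yc P N1 + 1 then 0 else 1)"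
        unfolding High_def yvar_def by (simp only: fps_X_power_mult_nth) simp
      then have "High $ b $ a = (if a = 0 \<and> Yc P N1 < b then 1 else 0)"
        by auto
      then show ?thesis unfolding Hset by simp
    qed
    show ?thesis unfolding Fg_def fps_nth_Abs_fps c fps_add_nth cM cL cH by (simp only: add_ac)
  qed
qed


lemma ones_ring: "(1 - fps_X) * Abs_fps (\<lambda>_. 1::'a::ring_1) = 1"
proof -
  have "(1 - fps_X) * fps_right_inverse (1 - fps_X :: 'a fps) 1 = 1"
    by (rule fps_right_inverse) simp
  then show ?thesis unfolding fps_lr_inverse_one_minus_fps_X(2) .
qed

lemma LowD: "(1 - xvar) * Low = xvar ^ (Xc P N0 + 1)"
proof -
  have "(1 - xvar) * Low = fps_const (fps_X ^ (Xc P N0 + 1) * ((1 - fps_X) * Abs_fps (\<lambda>_. 1)))"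
    unfolding Low_def xvar_def by (simp add: algebra_simps)
  also have "\<dots> = xvar ^ (Xc P N0 + 1)" unfolding ones_ring xvar_def by simp
  finally show ?thesis .
qed

lemma HighD: "(1 - yvar) * High = yvar ^ (Yc P N1 + 1)"
proof -
  have "(1 - yvar) * High = yvar ^ (Yc P N1 + 1) * ((1 - fps_X) * Abs_fps (\<lambda>_. 1))"
    unfolding High_def yvar_def by (simp add: algebra_simps)
  then show ?thesis unfolding ones_ring by simp
qed

definition "Sp = {s. \<not> P s \<and> P (s + 1)}"
definition "Sm = {s. P s \<and> \<not> P (s + 1)}"

lemma Sp_sub: "Sp \<subseteq> {N0 - 1..N1 - 1}"
proof
  fix s assume "s \<in> Sp"
  then have h: "\<not> P s" "P (s + 1)" by (auto simp: Sp_def)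
  have "s < N1 - 1 + 1"
  proof (rule ccontr)
    assume "\<not> s < N1 - 1 + 1"
    then have "N1 \<le> s" "N1 \<le> s + 1" by auto
    then show False using h right by blast
  qed
  moreover have "N0 - 1 < s"
  proof (rule ccontr)
    assume "\<not> N0 - 1 < s"
    then have "s \<le> N0" "s + 1 \<le> N0" by auto
    then show False using h left by blast
  qed
  ultimately show "s \<in> {N0 - 1..N1 - 1}" by simp
qed
lemma Sm_sub: "Sm \<subseteq> {N0 - 1..N1 - 1}"
proof
  fix s assume "s \<in> Sm"
  then have h: "P s" "\<not> P (s + 1)" by (auto simp: Sm_def)
  have "s < N1 - 1 + 1"
  proof (rule ccontr)
    assume "\<not> s < N1 - 1 + 1"
    then have "N1 \<le> s" "N1 \<le> s + 1" by auto
    then show False using h right by blast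
  qed
  moreover have "N0 - 1 < s"
  proof (rule ccontr)
    assume "\<not> N0 - 1 < s"
    then have "s \<le> N0" "s + 1 \<le> N0" by auto
    then show False using h left by blast
  qed
  ultimately show "s \<in> {N0 - 1..N1 - 1}" by simp
qed

lemma Sfin: "finite Sp" "finite Sm"
  using Sp_sub Sm_sub by (auto intro: finite_subset)

lemma ee_sum: "(\<Sum>s\<in>{N0 - 1..N1 - 1}. ee P s * fm P s) = (\<Sum>s\<in>Sp. fm P s) - (\<Sum>s\<in>Sm. fm P s)"
proof -
  have "(\<Sum>s\<in>{N0 - 1..N1 - 1}. ee P s * fm P s) =
     (\<Sum>s\<in>{N0 - 1..N1 - 1}. (if s \<in> Sp then fm P s else 0) - (if s \<in> Sm then fm P s else 0))"
    by (intro sum.cong) (auto simp: ee_def Sp_def Sm_def)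
  also have "\<dots> = (\<Sum>s\<in>{N0 - 1..N1 - 1} \<inter> Sp. fm P s) - (\<Sum>s\<in>{N0 - 1..N1 - 1} \<inter> Sm. fm P s)"
    by (simp add: sum_subtractf sum.inter_restrict)
  also have "\<dots> = (\<Sum>s\<in>Sp. fm P s) - (\<Sum>s\<in>Sm. fm P s)"
    using Sp_sub Sm_sub by (simp add: Int_absorb1)
  finally show ?thesis .
qed

lemma mainD: "(1 - xvar) * (1 - yvar) * Fg = (1 - xvar * yvar) * ((\<Sum>s\<in>Sp. fm P s) - (\<Sum>s\<in>Sm. fm P s))"
proof -
  define d where "d = nat (N1 - N0)"
  have d1: "N0 + int d = N1" "N0 - 1 + int d = N1 - 1" using N01 by (auto simp: d_def)
  have T: "(1 - xvar) * (1 - yvar) * (\<Sum>s\<in>{N0..N1}. fm P s) =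
   (1 - xvar * yvar) * (\<Sum>s\<in>{N0 - 1..N1 - 1}. ee P s * fm P s)
   + ph P N1 * fm P N1 - ph P (N0 - 1) * fm P (N0 - 1)"
    using tele[of d] unfolding d1 .
  have p1: "ph P N1 = - ((1 - xvar) * yvar)" using right[of N1] by (simp add: ph_def)
  have p0: "ph P (N0 - 1) = 1 - yvar" using left[of "N0 - 1"] by (simp add: ph_def)
  have f1: "fm P N1 = yvar ^ Yc P N1" using highX[of N1] by (simp add: fm_def monom2_def)
  have f0: "fm P (N0 - 1) = xvar ^ (Xc P N0 + 1)"
    using Xstep[of N0] left[of N0] lowY[of "N0 - 1"] by (simp add: fm_def monom2_def)
  have "(1 - xvar) * (1 - yvar) * Fg = (1 - xvar) * (1 - yvar) * (\<Sum>s\<in>{N0..N1}. fm P s)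
      + (1 - yvar) * ((1 - xvar) * Low) + (1 - xvar) * ((1 - yvar) * High)"
    unfolding Fg_split by (simp add: algebra_simps)
  also have "\<dots> = (1 - xvar * yvar) * (\<Sum>s\<in>{N0 - 1..N1 - 1}. ee P s * fm P s)"
    unfolding T LowD HighD p1 p0 f1 f0 by (simp add: algebra_simps)
  finally show ?thesis unfolding ee_sum .
qed

lemma main: "Fg = (1 - xvar * yvar) * inverse ((1 - xvar) * (1 - yvar)) * ((\<Sum>s\<in>Sp. fm P s) - (\<Sum>s\<in>Sm. fm P s))"
proof -
  have "Fg = inverse ((1 - xvar) * (1 - yvar)) * ((1 - xvar) * (1 - yvar)) * Fg"
    using Dinv by simp
  also have "\<dots> = inverse ((1 - xvar) * (1 - yvar)) * ((1 - xvar) * (1 - yvar) * Fg)"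
    by (simp only: mult.assoc)
  also have "\<dots> = (1 - xvar * yvar) * inverse ((1 - xvar) * (1 - yvar)) * ((\<Sum>s\<in>Sp. fm P s) - (\<Sum>s\<in>Sm. fm P s))"
    unfolding mainD by (simp only: mult_ac)
  finally show ?thesis .
qed


lemma fin_level: "finite {s. Xc P s = a \<and> Yc P s = b}"
proof -
  have eS: "{s. Xc P s = a \<and> Yc P s = b} = {s. s < N0 \<and> Xc P s = a \<and> Yc P s = b} \<union> {s\<in>{N0..N1}. Xc P s = a \<and> Yc P s = b}
     \<union> {s. N1 < s \<and> Xc P s = a \<and> Yc P s = b}" by auto
  have "finite {s\<in>{N0..N1}. Xc P s = a \<and> Yc P s = b}"
    by (rule finite_subset[of _ "{N0..N1}"]) auto
  then show ?thesis unfolding eS Lset Hset by simp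
qed

end

lemma rvec_sink: "1 \<le> m \<Longrightarrow> rvec m n (set_sink m u s) = rvec m n u"
proof
  fix i assume m: "1 \<le> m"
  have "{j \<in> {1..m-1}. set_sink m u s (A j) + 1 \<le> int i - 1} = {j \<in> {1..m-1}. u (A j) + 1 \<le> int i - 1}"
    using m by (auto simp: set_sink_def)
  then show "rvec m n (set_sink m u s) i = rvec m n u i"
    by (simp add: rvec_def set_sink_def)
qed

lemma right_sink: "1 \<le> m \<Longrightarrow> is_right m n (set_sink m u s) = is_right m n u"
  by (rule ext) (simp add: is_right_def rvec_sink)

lemma xpara_sink: "1 \<le> m \<Longrightarrow> xpara m n (set_sink m u s) = Xc (is_right m n u) s"
  by (simp add: xpara_def Xc_def right_sink, simp add: set_sink_def)

lemma ypara_sink: "1 \<le> m \<Longrightarrow> ypara m n (set_sink m u s) = Yc (is_right m n u) s"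
  by (simp add: ypara_def Yc_def right_sink, simp add: set_sink_def)

lemma bounds:
  fixes m n :: nat and u :: "vert \<Rightarrow> int"
  assumes n: "1 \<le> n"
  defines "R \<equiv> (\<Sum>i\<in>{1..n}. \<bar>rvec m n u i\<bar>)"
  shows "bnd (is_right m n u) (- (R + 1) * int n) ((R + 1) * int n)"
proof
  have R0: "0 \<le> R" unfolding R_def by (rule sum_nonneg) simp
  have rb: "\<bar>rvec m n u (nat (\<sigma> mod int n) + 1)\<bar> \<le> R" for \<sigma>
  proof -
    have "0 \<le> \<sigma> mod int n" "\<sigma> mod int n < int n" using n by auto
    then have "nat (\<sigma> mod int n) < n" by (simp add: nat_less_iff)
    then have "nat (\<sigma> mod int n) + 1 \<in> {1..n}" by simp
    then show ?thesis unfolding R_def by (intro member_le_sum) auto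
  qed
  have dm: "\<sigma> = int n * (\<sigma> div int n) + \<sigma> mod int n" for \<sigma> by simp
  have mb: "0 \<le> \<sigma> mod int n" "\<sigma> mod int n < int n" for \<sigma> using n by auto
  show "\<not> is_right m n u \<sigma>" if "\<sigma> \<le> - (R + 1) * int n" for \<sigma>
  proof
    assume "is_right m n u \<sigma>"
    then have "\<sigma> div int n \<ge> 1 - R" using rb[of \<sigma>] unfolding is_right_def by linarith
    then have "int n * (\<sigma> div int n) \<ge> int n * (1 - R)" by (intro mult_left_mono) auto
    then have "\<sigma> \<ge> int n * (1 - R)" using dm[of \<sigma>] mb[of \<sigma>] by linarith
    moreover have "int n * (1 - R) = int n - int n * R" by (simp add: algebra_simps)
    moreover have "- (R + 1) * int n = - (int n * R) - int n" by (simp add: algebra_simps)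
    moreover have "(1::int) \<le> int n" using n by simp
    moreover note that
    ultimately show False by (smt (verit))
  qed
  show "is_right m n u \<sigma>" if "(R + 1) * int n \<le> \<sigma>" for \<sigma>
  proof (rule ccontr)
    assume "\<not> is_right m n u \<sigma>"
    then have "\<sigma> div int n \<le> R" using rb[of \<sigma>] unfolding is_right_def by linarith
    then have "int n * (\<sigma> div int n) \<le> int n * R" by (intro mult_left_mono) auto
    then have "\<sigma> < int n * R + int n" using dm[of \<sigma>] mb[of \<sigma>] by linarith
    moreover have "(R + 1) * int n = int n * R + int n" by (simp add: algebra_simps)
    ultimately show False using that by linarith
  qed
  have "0 < (R + 1) * int n" using R0 n by simp
  moreover have "- (R + 1) * int n = - ((R + 1) * int n)" by (simp add: algebra_simps)
  ultimately show "- (R + 1) * int n < (R + 1) * int n" by linarith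
qed


theorem lemma15p1:
  fixes m n :: nat and u :: "vert \<Rightarrow> int"
  assumes "1 \<le> m" and "1 \<le> n"
    and "parking m n u" and "sorted_conf m n u"
  shows "(\<forall>a b. finite {s::int. xpara m n (set_sink m u s) = a \<and> ypara m n (set_sink m u s) = b})
    \<and> finite (Splus m n u) \<and> finite (Sminus m n u)
    \<and> Fser m n u =
        (1 - xvar * yvar) * inverse ((1 - xvar) * (1 - yvar)) *
        ((\<Sum>s\<in>Splus m n u. monom2 (xpara m n (set_sink m u s)) (ypara m n (set_sink m u s)))
         - (\<Sum>s\<in>Sminus m n u. monom2 (xpara m n (set_sink m u s)) (ypara m n (set_sink m u s))))"
proof -
  define P where "P = is_right m n u"
  obtain N0 N1 where B: "bnd P N0 N1" using bounds[OF assms(2), of m u] unfolding P_def by blast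
  interpret bnd P N0 N1 by (rule B)
  have X: "\<And>s. xpara m n (set_sink m u s) = Xc P s" using xpara_sink assms(1) unfolding P_def by blast
  have Y: "\<And>s. ypara m n (set_sink m u s) = Yc P s" using ypara_sink assms(1) unfolding P_def by blast
  have SP: "Splus m n u = Sp" unfolding Splus_def Sp_def P_def[symmetric] by simp
  have SM: "Sminus m n u = Sm" unfolding Sminus_def Sm_def P_def[symmetric] by simp
  have F: "Fser m n u = Fg" unfolding Fser_def Fg_def X Y ..
  have M: "\<And>s. monom2 (xpara m n (set_sink m u s)) (ypara m n (set_sink m u s)) = fm P s"
    unfolding X Y fm_def ..
  show ?thesis unfolding SP SM F M X Y using fin_level Sfin main[unfolded fm_def] by blast
qed

end
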